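(* As $\varepsilon\to0$, the first order semi-implicit scheme $U^{n+1} = U^n - \Delta t\,\nabla\cdot\hat F(U^n) - \Delta t\,\nabla\cdot\tilde F(U^{n+1})$ is consistent with \begin{align*} \begin{pmatrix} \rho^{n+1,(0)} \\ (\rho \mathbf{u})^{n+1,(0)} \\ \frac{p^{n+1,(0)}}{\gamma - 1} \end{pmatrix} &= \begin{pmatrix} \rho^{n,(0)} \\ (\rho \mathbf{u})^{n,(0)} \\ \frac{p^{n,(0)}}{\gamma - 1} \end{pmatrix} - \Delta t \nabla \cdot \left\{ \begin{pmatrix} \rho^{n,(0)} \mathbf{u}^{n,(0)} \\ \rho^{n,(0)} \mathbf{u}^{n,(0)}\otimes\mathbf{u}^{n,(0)} + p^{n,(0)} \, I \\ \left( \frac {p^{n,(0)}} {\gamma - 1} + p_\infty^{n,(0)} \right) \mathbf{u}^{n,(0)} \end{pmatrix} \right. \\ & \quad \left. + \varepsilon^{-2} \begin{pmatrix} 0 \\ p^{n+1,(0)} \, I \\ 0 \end{pmatrix} + \varepsilon^{-1} \begin{pmatrix} 0 \\ p^{n+1,(1)} \, I \\ 0 \end{pmatrix} + \begin{pmatrix} 0 \\ \left( p^{n+1,(2)} - p^{n+1,(0)} \right) \, I \\ (p^{n+1,(0)}-p_\infty^{n+1,(0)})\mathbf{u}^{n+1,(0)} \end{pmatrix} \right\} + \mathcal O (\varepsilon), \end{align*} where $I$ is the $d\times d$ identity matrix.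
   Context: Consider the non-dimensionalised compressible Euler equations $U_t+\nabla\cdot F(U)=0$ with $U=(\rho,\rho\mathbf u,\rho E)$, $F(U)=(\rho\mathbf u,\ \rho\mathbf u\otimes\mathbf u+\frac{p}{\varepsilon^2}I,\ (\rho E+p)\mathbf u)$, reference Mach number $0<\varepsilon\le1$, equation of state $p=(\gamma-1)(\rho E-\frac{\varepsilon^2}{2}\rho\|\mathbf u\|^2)$, $\gamma>1$. The flux is split as $F=\hat F+\tilde F$ with non-stiff part $\hat F(U)=(\rho\mathbf u,\ \rho\mathbf u\otimes\mathbf u+pI,\ (\rho E+\Pi)\mathbf u)$ and stiff part $\tilde F(U)=(0,\ \frac{1-\varepsilon^2}{\varepsilon^2}pI,\ (p-\Pi)\mathbf u)=(1-\varepsilon^2)(0,\ \frac{p}{\varepsilon^2}I,\ (p-p_\infty)\mathbf u)$, where $\Pi=\varepsilon^2p+(1-\varepsilon^2)p_\infty$ and the reference pressure is $p_\infty(t)=\inf_{\mathbf x}p(\mathbf x,t)$. The time-discrete scheme treats $\hat F$ explicitly and $\tilde F$ implicitly as stated. The numerical solution is expanded asymptotically: $\rho^n=\rho^{n,(0)}+\varepsilon\rho^{n,(1)}+\varepsilon^2\rho^{n,(2)}+\mathcal O(\varepsilon^3)$, and likewise for $\mathbf u^n$, $p^n$ and $p_\infty^n$; consequently $(\rho E)^{n,(0)}=p^{n,(0)}/(\gamma-1)$ and $\Pi^{n,(0)}=p_\infty^{n,(0)}$. *)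

theory Defs
  imports "HOL-Analysis.Analysis" "HOL-Library.Landau_Symbols"
begin

definition pdx :: "'d::finite \<Rightarrow> (real^'d \<Rightarrow> 'b::real_normed_vector) \<Rightarrow> real^'d \<Rightarrow> 'b" where
  "pdx i g x = frechet_derivative g (at x) (axis i 1)"

definition divv :: "(real^'d::finite \<Rightarrow> real^'d) \<Rightarrow> real^'d \<Rightarrow> real" where
  "divv F x = (\<Sum>i\<in>UNIV. pdx i F x $ i)"

definition divm :: "(real^'d::finite \<Rightarrow> real^'d^'d) \<Rightarrow> real^'d \<Rightarrow> real^'d" where
  "divm M x = (\<chi> j. \<Sum>i\<in>UNIV. pdx i M x $ j $ i)"

definition outer :: "real^'d::finite \<Rightarrow> real^'d \<Rightarrow> real^'d^'d" where
  "outer a b = (\<chi> i j. a $ i * b $ j)"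

text \<open>Total energy density rho E from the equation of state
  p = (gamma-1)(rho E - eps^2/2 rho |u|^2).\<close>
definition total_energy :: "real \<Rightarrow> real \<Rightarrow> real \<Rightarrow> real^'d::finite \<Rightarrow> real \<Rightarrow> real" where
  "total_energy \<gamma> \<epsilon> \<rho> u p = p / (\<gamma> - 1) + \<epsilon>\<^sup>2 / 2 * \<rho> * (norm u)\<^sup>2"

definition Pi_fun :: "real \<Rightarrow> real \<Rightarrow> real \<Rightarrow> real" where
  "Pi_fun \<epsilon> p pinf = \<epsilon>\<^sup>2 * p + (1 - \<epsilon>\<^sup>2) * pinf"

definition field_expansion ::
    "(real \<Rightarrow> real^'d::finite \<Rightarrow> 'b::real_normed_vector) \<Rightarrow> (nat \<Rightarrow> real^'d \<Rightarrow> 'b) \<Rightarrow> bool" where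
  "field_expansion f c \<longleftrightarrow>
     (\<forall>\<epsilon>\<in>{0<..1}. \<forall>x. f \<epsilon> differentiable (at x)) \<and>
     (\<forall>k\<le>2. \<forall>x. c k differentiable (at x)) \<and>
     (\<forall>x. (\<lambda>\<epsilon>. norm (f \<epsilon> x - (c 0 x + \<epsilon> *\<^sub>R c 1 x + \<epsilon>\<^sup>2 *\<^sub>R c 2 x)))
            \<in> O[at_right 0](\<lambda>\<epsilon>. \<epsilon> ^ 3)) \<and>
     (\<forall>x i. (\<lambda>\<epsilon>. norm (pdx i (\<lambda>y. f \<epsilon> y - (c 0 y + \<epsilon> *\<^sub>R c 1 y + \<epsilon>\<^sup>2 *\<^sub>R c 2 y)) x))
            \<in> O[at_right 0](\<lambda>\<epsilon>. \<epsilon> ^ 3))"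

text \<open>Expansion of a spatially constant quantity (the reference pressure).\<close>
definition const_expansion :: "(real \<Rightarrow> real) \<Rightarrow> (nat \<Rightarrow> real) \<Rightarrow> bool" where
  "const_expansion f c \<longleftrightarrow>
     (\<lambda>\<epsilon>. norm (f \<epsilon> - (c 0 + \<epsilon> * c 1 + \<epsilon>\<^sup>2 * c 2))) \<in> O[at_right 0](\<lambda>\<epsilon>. \<epsilon> ^ 3)"

end

theory Submission imports Defs begin

definition AP :: "(real \<Rightarrow> 'a::real_normed_vector) \<Rightarrow> 'a \<Rightarrow> bool" where
  "AP f c \<longleftrightarrow> (\<exists>C. eventually (\<lambda>e. norm (f e - c) \<le> C * e) (at_right 0))"

lemma ev_pos: "eventually (\<lambda>e::real. 0 < e \<and> e \<le> 1) (at_right 0)"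
  unfolding eventually_at_right_field by (intro exI[of _ 1]) auto

lemma AP_const: "AP (\<lambda>_. c) c"
  unfolding AP_def by (intro exI[of _ 0]) (auto intro: eventually_mono[OF ev_pos])

lemma AP_cong_ev: assumes "eventually (\<lambda>e. f e = g e) (at_right 0)" "AP f c" shows "AP g c"
proof -
  from assms(2) obtain C where C: "eventually (\<lambda>e. norm (f e - c) \<le> C * e) (at_right 0)"
    unfolding AP_def by blast
  have "eventually (\<lambda>e. norm (g e - c) \<le> C * e) (at_right 0)" using assms(1) C
    by eventually_elim simp
  thus ?thesis unfolding AP_def by blast
qed

lemma AP_add: assumes "AP f a" "AP g b" shows "AP (\<lambda>e. f e + g e) (a + b)"
proof -
  from assms obtain C1 C2 where 1: "eventually (\<lambda>e. norm (f e - a) \<le> C1 * e) (at_right 0)"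
    and 2: "eventually (\<lambda>e. norm (g e - b) \<le> C2 * e) (at_right 0)" unfolding AP_def by blast
  have "eventually (\<lambda>e. norm (f e + g e - (a + b)) \<le> (C1 + C2) * e) (at_right 0)"
    using 1 2
  proof eventually_elim
    case (elim e)
    have "f e + g e - (a + b) = (f e - a) + (g e - b)" by simp
    hence "norm (f e + g e - (a + b)) \<le> norm (f e - a) + norm (g e - b)"
      using norm_triangle_ineq by metis
    thus ?case using elim by (simp add: distrib_right)
  qed
  thus ?thesis unfolding AP_def by blast
qed

lemma AP_neg: assumes "AP f a" shows "AP (\<lambda>e. - f e) (- a)"
proof -
  have "norm (- f e - - a) = norm (f e - a)" for e by (simp add: norm_minus_commute)
  thus ?thesis using assms unfolding AP_def by simp
qed

lemma AP_diff: assumes "AP f a" "AP g b" shows "AP (\<lambda>e. f e - g e) (a - b)"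
  using AP_add[OF assms(1) AP_neg[OF assms(2)]] by simp

lemma AP_eps: "AP (\<lambda>e. e) (0::real)"
  unfolding AP_def by (intro exI[of _ 1]) (auto intro: eventually_mono[OF ev_pos])

lemma AP_bilinear:
  assumes bb: "bounded_bilinear pr" and "AP f a" "AP g b"
  shows "AP (\<lambda>e. pr (f e) (g e)) (pr a b)"
proof -
  interpret bounded_bilinear pr by fact
  obtain K where K: "K > 0" "\<And>x y. norm (pr x y) \<le> norm x * norm y * K" using pos_bounded by blast
  from assms obtain C1 C2 where 1: "eventually (\<lambda>e. norm (f e - a) \<le> C1 * e) (at_right 0)"
    and 2: "eventually (\<lambda>e. norm (g e - b) \<le> C2 * e) (at_right 0)" unfolding AP_def by blast
  have "eventually (\<lambda>e. norm (pr (f e) (g e) - pr a b) \<le> (K * C1 * (norm b + \<bar>C2\<bar>) + K * norm a * C2) * e) (at_right 0)"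
    using 1 2 ev_pos
  proof eventually_elim
    case (elim e)
    have eq: "pr (f e) (g e) - pr a b = pr (f e - a) (g e) + pr a (g e - b)"
      by (simp add: diff_left diff_right)
    have c2: "C2 * e \<le> \<bar>C2\<bar>"
    proof -
      have "C2 * e \<le> \<bar>C2\<bar> * e" using elim by (intro mult_right_mono) auto
      also have "\<dots> \<le> \<bar>C2\<bar> * 1" using elim by (intro mult_left_mono) auto
      finally show ?thesis by simp
    qed
    have gb: "norm (g e) \<le> norm b + \<bar>C2\<bar>"
    proof -
      have "norm (g e) \<le> norm b + norm (g e - b)" by (rule norm_triangle_sub)
      also have "norm (g e - b) \<le> \<bar>C2\<bar>" using elim c2 by linarith
      finally show ?thesis by simp
    qed
    have c1: "0 \<le> C1 * e" using elim(1) norm_ge_zero order_trans by blast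
    have "norm (pr (f e) (g e) - pr a b) \<le> norm (pr (f e - a) (g e)) + norm (pr a (g e - b))"
      unfolding eq by (rule norm_triangle_ineq)
    also have "\<dots> \<le> norm (f e - a) * norm (g e) * K + norm a * norm (g e - b) * K"
      using K by (intro add_mono) auto
    also have "norm (f e - a) * norm (g e) * K \<le> (C1 * e) * (norm b + \<bar>C2\<bar>) * K"
      using elim gb K c1 by (intro mult_right_mono mult_mono) auto
    also have "norm a * norm (g e - b) * K \<le> norm a * (C2 * e) * K"
      using elim K by (intro mult_right_mono mult_left_mono) auto
    finally show ?case by (simp add: algebra_simps)
  qed
  thus ?thesis unfolding AP_def by blast
qed

lemma AP_scale: "AP f a \<Longrightarrow> AP (\<lambda>e. c *\<^sub>R f e) (c *\<^sub>R a)"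
  using AP_bilinear[OF bounded_bilinear_scaleR AP_const] by blast

lemma AP_unique: assumes "AP f a" "AP f b" shows "a = b"
proof -
  from assms obtain C1 C2 where 1: "eventually (\<lambda>e. norm (f e - a) \<le> C1 * e) (at_right 0)"
    and 2: "eventually (\<lambda>e. norm (f e - b) \<le> C2 * e) (at_right 0)" unfolding AP_def by blast
  have "eventually (\<lambda>e. norm (a - b) \<le> (C1 + C2) * e) (at_right 0)" using 1 2
  proof eventually_elim
    case (elim e)
    have "norm ((f e - b) - (f e - a)) \<le> norm (f e - b) + norm (f e - a)"
      by (rule norm_triangle_ineq4)
    thus ?case using elim by (simp add: distrib_right)
  qed
  moreover have "((\<lambda>e. (C1 + C2) * e) \<longlongrightarrow> 0) (at_right 0)"
  proof -
    have "((\<lambda>e. (C1 + C2) * e) \<longlongrightarrow> (C1 + C2) * 0) (at_right 0)"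
      by (intro tendsto_mult tendsto_const tendsto_ident_at)
    thus ?thesis by simp
  qed
  ultimately have "norm (a - b) \<le> 0"
    using tendsto_lowerbound[where F="at_right (0::real)"] by (metis trivial_limit_at_right_real)
  thus ?thesis by simp
qed

lemma AP_sum: "finite A \<Longrightarrow> (\<And>i. i \<in> A \<Longrightarrow> AP (f i) (c i)) \<Longrightarrow> AP (\<lambda>e. \<Sum>i\<in>A. f i e) (\<Sum>i\<in>A. c i)"
proof (induction A rule: finite_induct)
  case empty
  then show ?case using AP_const[of 0] by simp
next
  case (insert x F)
  then show ?case using AP_add[of "f x" "c x" "\<lambda>e. \<Sum>i\<in>F. f i e" "\<Sum>i\<in>F. c i"] by simp
qed

lemma AP_component: fixes f :: "real \<Rightarrow> 'a::real_normed_vector^'n::finite" assumes "AP f c" shows "AP (\<lambda>e. f e $ j) (c $ j)"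
proof -
  have n: "norm (f e $ j - c $ j) \<le> norm (f e - c)" for e
    using Finite_Cartesian_Product.norm_nth_le[of "f e - c" j] by simp
  from assms obtain C where C: "eventually (\<lambda>e. norm (f e - c) \<le> C * e) (at_right 0)"
    unfolding AP_def by blast
  have "eventually (\<lambda>e. norm (f e $ j - c $ j) \<le> C * e) (at_right 0)" using C
    by eventually_elim (rule order_trans[OF n])
  thus ?thesis unfolding AP_def by blast
qed

lemma AP_vec: fixes f :: "real \<Rightarrow> real^'n::finite"
  assumes "\<And>j. AP (\<lambda>e. f e $ j) (c $ j)" shows "AP f c"
proof -
  from assms have "\<forall>j. \<exists>C. eventually (\<lambda>e. norm (f e $ j - c $ j) \<le> C * e) (at_right 0)"
    unfolding AP_def by blast
  then obtain C where C: "\<forall>j. eventually (\<lambda>e. norm (f e $ j - c $ j) \<le> C j * e) (at_right 0)"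
    by (rule choice[THEN exE])
  have "eventually (\<lambda>e. \<forall>j. norm (f e $ j - c $ j) \<le> C j * e) (at_right 0)"
    using C by (subst eventually_all_finite) auto
  hence "eventually (\<lambda>e. norm (f e - c) \<le> (\<Sum>j\<in>UNIV. C j) * e) (at_right 0)"
  proof eventually_elim
    case (elim e)
    have "norm (f e - c) \<le> (\<Sum>j\<in>UNIV. \<bar>(f e - c) $ j\<bar>)" by (rule norm_le_l1_cart)
    also have "\<dots> \<le> (\<Sum>j\<in>UNIV. C j * e)" using elim by (intro sum_mono) auto
    finally show ?case by (simp add: sum_distrib_right)
  qed
  thus ?thesis unfolding AP_def by blast
qed


lemma pdx_eq: "(f has_derivative f') (at x) \<Longrightarrow> pdx i f x = f' (axis i 1)"
  unfolding pdx_def by (metis frechet_derivative_at)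

lemma Dd: "f differentiable (at x) \<Longrightarrow> (f has_derivative frechet_derivative f (at x)) (at x)"
  using frechet_derivative_works by blast

lemma pdx_bilinear:
  assumes bb: "bounded_bilinear pr" and f: "f differentiable (at x)" and g: "g differentiable (at x)"
  shows "((\<lambda>y. pr (f y) (g y)) has_derivative
           (\<lambda>h. pr (f x) (frechet_derivative g (at x) h) + pr (frechet_derivative f (at x) h) (g x))) (at x)"
    and "pdx i (\<lambda>y. pr (f y) (g y)) x = pr (f x) (pdx i g x) + pr (pdx i f x) (g x)"
proof -
  interpret bounded_bilinear pr by fact
  show d: "((\<lambda>y. pr (f y) (g y)) has_derivative
           (\<lambda>h. pr (f x) (frechet_derivative g (at x) h) + pr (frechet_derivative f (at x) h) (g x))) (at x)"
    by (rule FDERIV) (use Dd[OF f] Dd[OF g] in auto)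
  show "pdx i (\<lambda>y. pr (f y) (g y)) x = pr (f x) (pdx i g x) + pr (pdx i f x) (g x)"
    using pdx_eq[OF d] by (simp add: pdx_def)
qed

lemma pdx_add:
  assumes f: "f differentiable (at x)" and g: "g differentiable (at x)"
  shows "(\<lambda>y. f y + g y) differentiable (at x)"
    and "pdx i (\<lambda>y. f y + g y) x = pdx i f x + pdx i g x"
proof -
  have d: "((\<lambda>y. f y + g y) has_derivative (\<lambda>h. frechet_derivative f (at x) h + frechet_derivative g (at x) h)) (at x)"
    using Dd[OF f] Dd[OF g] by (rule has_derivative_add)
  thus "(\<lambda>y. f y + g y) differentiable (at x)" by (rule differentiableI)
  show "pdx i (\<lambda>y. f y + g y) x = pdx i f x + pdx i g x"
    using pdx_eq[OF d] by (simp add: pdx_def)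
qed

lemma pdx_diff:
  assumes f: "f differentiable (at x)" and g: "g differentiable (at x)"
  shows "(\<lambda>y. f y - g y) differentiable (at x)"
    and "pdx i (\<lambda>y. f y - g y) x = pdx i f x - pdx i g x"
proof -
  have d: "((\<lambda>y. f y - g y) has_derivative (\<lambda>h. frechet_derivative f (at x) h - frechet_derivative g (at x) h)) (at x)"
    using Dd[OF f] Dd[OF g] by (rule has_derivative_diff)
  thus "(\<lambda>y. f y - g y) differentiable (at x)" by (rule differentiableI)
  show "pdx i (\<lambda>y. f y - g y) x = pdx i f x - pdx i g x"
    using pdx_eq[OF d] by (simp add: pdx_def)
qed

lemma pdx_scale:
  assumes f: "f differentiable (at x)"
  shows "(\<lambda>y. a *\<^sub>R f y) differentiable (at x)"
    and "pdx i (\<lambda>y. a *\<^sub>R f y) x = a *\<^sub>R pdx i f x"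
proof -
  have d: "((\<lambda>y. a *\<^sub>R f y) has_derivative (\<lambda>h. a *\<^sub>R frechet_derivative f (at x) h)) (at x)"
    using Dd[OF f] by (rule has_derivative_scaleR_right)
  thus "(\<lambda>y. a *\<^sub>R f y) differentiable (at x)" by (rule differentiableI)
  show "pdx i (\<lambda>y. a *\<^sub>R f y) x = a *\<^sub>R pdx i f x"
    using pdx_eq[OF d] by (simp add: pdx_def)
qed

lemma pdx_const: "pdx i (\<lambda>y. c) x = 0"
  by (rule pdx_eq[OF has_derivative_const, THEN trans]) simp

definition good :: "(real \<Rightarrow> real^'d::finite \<Rightarrow> 'b::real_normed_vector) \<Rightarrow> (real^'d \<Rightarrow> 'b) \<Rightarrow> real^'d \<Rightarrow> bool" where
  "good F G x \<longleftrightarrow> eventually (\<lambda>e. F e differentiable (at x)) (at_right 0) \<and> G differentiable (at x)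
     \<and> AP (\<lambda>e. F e x) (G x) \<and> (\<forall>i. AP (\<lambda>e. pdx i (F e) x) (pdx i G x))"

lemma good_bilinear:
  assumes bb: "bounded_bilinear pr" and F: "good F G x" and H: "good H K x"
  shows "good (\<lambda>e y. pr (F e y) (H e y)) (\<lambda>y. pr (G y) (K y)) x"
proof -
  note dF = F[unfolded good_def] and dH = H[unfolded good_def]
  have ev: "eventually (\<lambda>e. F e differentiable (at x) \<and> H e differentiable (at x)) (at_right 0)"
    using dF dH eventually_conj by blast
  have 1: "eventually (\<lambda>e. (\<lambda>y. pr (F e y) (H e y)) differentiable (at x)) (at_right 0)"
    using ev by eventually_elim (use pdx_bilinear(1)[OF bb] differentiableI in blast)
  have 2: "(\<lambda>y. pr (G y) (K y)) differentiable (at x)"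
    using pdx_bilinear(1)[OF bb] differentiableI dF dH by blast
  have 3: "AP (\<lambda>e. pr (F e x) (H e x)) (pr (G x) (K x))"
    using AP_bilinear[OF bb] dF dH by blast
  have 4: "AP (\<lambda>e. pdx i (\<lambda>y. pr (F e y) (H e y)) x) (pdx i (\<lambda>y. pr (G y) (K y)) x)" for i
  proof -
    have a: "AP (\<lambda>e. pr (F e x) (pdx i (H e) x) + pr (pdx i (F e) x) (H e x))
             (pr (G x) (pdx i K x) + pr (pdx i G x) (K x))"
      using dF dH by (intro AP_add AP_bilinear[OF bb]) auto
    have b: "eventually (\<lambda>e. pr (F e x) (pdx i (H e) x) + pr (pdx i (F e) x) (H e x)
          = pdx i (\<lambda>y. pr (F e y) (H e y)) x) (at_right 0)"
      using ev by eventually_elim (simp add: pdx_bilinear(2)[OF bb])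
    have c: "pdx i (\<lambda>y. pr (G y) (K y)) x = pr (G x) (pdx i K x) + pr (pdx i G x) (K x)"
      using pdx_bilinear(2)[OF bb] dF dH by blast
    show ?thesis unfolding c by (rule AP_cong_ev[OF b a])
  qed
  show ?thesis unfolding good_def using 1 2 3 4 by blast
qed

lemma good_add:
  assumes F: "good F G x" and H: "good H K x"
  shows "good (\<lambda>e y. F e y + H e y) (\<lambda>y. G y + K y) x"
proof -
  note dF = F[unfolded good_def] and dH = H[unfolded good_def]
  have ev: "eventually (\<lambda>e. F e differentiable (at x) \<and> H e differentiable (at x)) (at_right 0)"
    using dF dH eventually_conj by blast
  have 1: "eventually (\<lambda>e. (\<lambda>y. F e y + H e y) differentiable (at x)) (at_right 0)"
    using ev by eventually_elim (use pdx_add(1) in blast)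
  have 2: "(\<lambda>y. G y + K y) differentiable (at x)" using pdx_add(1) dF dH by blast
  have 3: "AP (\<lambda>e. F e x + H e x) (G x + K x)" using AP_add dF dH by blast
  have 4: "AP (\<lambda>e. pdx i (\<lambda>y. F e y + H e y) x) (pdx i (\<lambda>y. G y + K y) x)" for i
  proof -
    have a: "AP (\<lambda>e. pdx i (F e) x + pdx i (H e) x) (pdx i G x + pdx i K x)"
      using dF dH by (intro AP_add) auto
    have b: "eventually (\<lambda>e. pdx i (F e) x + pdx i (H e) x
          = pdx i (\<lambda>y. F e y + H e y) x) (at_right 0)"
      using ev by eventually_elim (simp add: pdx_add(2))
    have c: "pdx i (\<lambda>y. G y + K y) x = pdx i G x + pdx i K x"
      using pdx_add(2) dF dH by blast
    show ?thesis unfolding c by (rule AP_cong_ev[OF b a])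
  qed
  show ?thesis unfolding good_def using 1 2 3 4 by blast
qed

lemma good_diff:
  assumes F: "good F G x" and H: "good H K x"
  shows "good (\<lambda>e y. F e y - H e y) (\<lambda>y. G y - K y) x"
proof -
  note dF = F[unfolded good_def] and dH = H[unfolded good_def]
  have ev: "eventually (\<lambda>e. F e differentiable (at x) \<and> H e differentiable (at x)) (at_right 0)"
    using dF dH eventually_conj by blast
  have 1: "eventually (\<lambda>e. (\<lambda>y. F e y - H e y) differentiable (at x)) (at_right 0)"
    using ev by eventually_elim (use pdx_diff(1) in blast)
  have 2: "(\<lambda>y. G y - K y) differentiable (at x)" using pdx_diff(1) dF dH by blast
  have 3: "AP (\<lambda>e. F e x - H e x) (G x - K x)" using AP_diff dF dH by blast
  have 4: "AP (\<lambda>e. pdx i (\<lambda>y. F e y - H e y) x) (pdx i (\<lambda>y. G y - K y) x)" for i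
  proof -
    have a: "AP (\<lambda>e. pdx i (F e) x - pdx i (H e) x) (pdx i G x - pdx i K x)"
      using dF dH by (intro AP_diff) auto
    have b: "eventually (\<lambda>e. pdx i (F e) x - pdx i (H e) x
          = pdx i (\<lambda>y. F e y - H e y) x) (at_right 0)"
      using ev by eventually_elim (simp add: pdx_diff(2))
    have c: "pdx i (\<lambda>y. G y - K y) x = pdx i G x - pdx i K x"
      using pdx_diff(2) dF dH by blast
    show ?thesis unfolding c by (rule AP_cong_ev[OF b a])
  qed
  show ?thesis unfolding good_def using 1 2 3 4 by blast
qed

lemma good_const: assumes "AP s s0" shows "good (\<lambda>e y. s e) (\<lambda>y. s0) x"
  unfolding good_def using assms by (simp add: pdx_const AP_const)

lemma good_cong:
  assumes "good F G x" "eventually (\<lambda>e. F e = F' e) (at_right 0)" "\<And>y. G y = G' y"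
  shows "good F' G' x"
proof -
  have G: "G = G'" using assms(3) by blast
  note d = assms(1)[unfolded good_def G]
  have 1: "eventually (\<lambda>e. F' e differentiable (at x)) (at_right 0)"
    using d assms(2) by (auto elim: eventually_elim2)
  have 3: "AP (\<lambda>e. F' e x) (G' x)"
  proof -
    have e: "eventually (\<lambda>e. F e x = F' e x) (at_right 0)" using assms(2) by (rule eventually_mono) simp
    show ?thesis using AP_cong_ev[OF e, of "G' x"] d by blast
  qed
  have 4: "AP (\<lambda>e. pdx i (F' e) x) (pdx i G' x)" for i
  proof -
    have e: "eventually (\<lambda>e. pdx i (F e) x = pdx i (F' e) x) (at_right 0)" using assms(2) by (rule eventually_mono) simp
    show ?thesis using AP_cong_ev[OF e, of "pdx i G' x"] d by blast
  qed
  show ?thesis unfolding good_def using 1 3 4 d by blast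
qed

lemma AP_bigo3:
  assumes "(\<lambda>e. norm (R e)) \<in> O[at_right 0](\<lambda>e. e ^ 3)"
  shows "AP (\<lambda>e. (1 / e\<^sup>2) *\<^sub>R R e) 0" "AP R 0"
proof -
  obtain C where C: "C > 0" "eventually (\<lambda>e. norm (norm (R e)) \<le> C * norm (e ^ 3)) (at_right 0)"
    using assms by (elim landau_o.bigE) auto
  have "eventually (\<lambda>e. norm ((1 / e\<^sup>2) *\<^sub>R R e - 0) \<le> C * e \<and> norm (R e - 0) \<le> C * e) (at_right 0)"
    using C(2) ev_pos
  proof eventually_elim
    case (elim e)
    hence n: "norm (R e) \<le> C * e ^ 3" by (simp add: abs_of_pos)
    have "norm ((1 / e\<^sup>2) *\<^sub>R R e) = norm (R e) / e\<^sup>2" using elim by simp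
    also have "\<dots> \<le> C * e ^ 3 / e\<^sup>2" using n elim by (intro divide_right_mono) auto
    also have "\<dots> = C * e" using elim by (simp add: power2_eq_square power3_eq_cube)
    finally have 1: "norm ((1 / e\<^sup>2) *\<^sub>R R e) \<le> C * e" .
    have "e ^ 3 \<le> e" using elim by (simp add: power_le_one power3_eq_cube mult_le_one)
    hence "C * e ^ 3 \<le> C * e" using C(1) by simp
    with 1 n show ?case by simp
  qed
  thus "AP (\<lambda>e. (1 / e\<^sup>2) *\<^sub>R R e) 0" "AP R 0" unfolding AP_def by (auto elim: eventually_mono)
qed

lemma AP_sq: "AP (\<lambda>e. e\<^sup>2) (0::real)"
  using AP_bilinear[OF bounded_bilinear_mult AP_eps AP_eps] by (simp add: power2_eq_square)

lemma AP_poly: "AP (\<lambda>e. a + e *\<^sub>R b + e\<^sup>2 *\<^sub>R c + R e) a" if "AP R 0"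
proof -
  have "AP (\<lambda>e. a + e *\<^sub>R b + e\<^sup>2 *\<^sub>R c + R e) (a + 0 *\<^sub>R b + 0 *\<^sub>R c + 0)"
    by (intro AP_add AP_const that AP_bilinear[OF bounded_bilinear_scaleR] AP_eps AP_sq)
  thus ?thesis by simp
qed

lemma good_exp: assumes "field_expansion f c" shows "good f (c 0) x"
proof -
  note d = assms[unfolded field_expansion_def]
  have ev1: "eventually (\<lambda>e. 0 < e \<and> e \<le> 1 \<and> (\<forall>y. f e differentiable (at y))) (at_right 0)"
    using ev_pos by eventually_elim (use d in auto)
  have 1: "eventually (\<lambda>e. f e differentiable (at x)) (at_right 0)" using ev1 by (auto elim: eventually_mono)
  have cd: "\<And>k y. k \<le> 2 \<Longrightarrow> c k differentiable (at y)" using d by blast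
  define R where "R e = f e x - (c 0 x + e *\<^sub>R c 1 x + e\<^sup>2 *\<^sub>R c 2 x)" for e
  have "AP R 0" using d unfolding R_def by (intro AP_bigo3(2)) blast
  hence "AP (\<lambda>e. c 0 x + e *\<^sub>R c 1 x + e\<^sup>2 *\<^sub>R c 2 x + R e) (c 0 x)" by (rule AP_poly)
  hence 3: "AP (\<lambda>e. f e x) (c 0 x)" unfolding R_def by simp
  have 4: "AP (\<lambda>e. pdx i (f e) x) (pdx i (c 0) x)" for i
  proof -
    define S where "S e = pdx i (\<lambda>y. f e y - (c 0 y + e *\<^sub>R c 1 y + e\<^sup>2 *\<^sub>R c 2 y)) x" for e
    have "AP S 0" using d unfolding S_def by (intro AP_bigo3(2)) blast
    hence "AP (\<lambda>e. pdx i (c 0) x + e *\<^sub>R pdx i (c 1) x + e\<^sup>2 *\<^sub>R pdx i (c 2) x + S e) (pdx i (c 0) x)"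
      by (rule AP_poly)
    moreover have "eventually (\<lambda>e. pdx i (c 0) x + e *\<^sub>R pdx i (c 1) x + e\<^sup>2 *\<^sub>R pdx i (c 2) x + S e
        = pdx i (f e) x) (at_right 0)"
      using ev1
    proof eventually_elim
      case (elim e)
      have d0: "c 0 differentiable (at x)" and d1: "c 1 differentiable (at x)" and d2: "c 2 differentiable (at x)"
        using cd by auto
      have "S e = pdx i (f e) x - pdx i (\<lambda>y. c 0 y + e *\<^sub>R c 1 y + e\<^sup>2 *\<^sub>R c 2 y) x"
        unfolding S_def using elim d0 d1 d2
        by (intro pdx_diff(2)) (auto intro!: pdx_add(1) pdx_scale(1))
      also have "pdx i (\<lambda>y. c 0 y + e *\<^sub>R c 1 y + e\<^sup>2 *\<^sub>R c 2 y) x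
          = pdx i (c 0) x + e *\<^sub>R pdx i (c 1) x + e\<^sup>2 *\<^sub>R pdx i (c 2) x"
        using d0 d1 d2 by (simp add: pdx_add pdx_scale)
      finally show ?case by simp
    qed
    ultimately show ?thesis by (rule AP_cong_ev[rotated])
  qed
  show ?thesis unfolding good_def using 1 3 4 cd[of 0 x] by auto
qed

lemma good_divv:
  fixes F :: "real \<Rightarrow> real^'d::finite \<Rightarrow> real^'d"
  assumes "good F G x" shows "AP (\<lambda>e. divv (F e) x) (divv G x)"
  unfolding divv_def using assms[unfolded good_def]
  by (intro AP_sum AP_component) auto

lemma good_divm:
  fixes F :: "real \<Rightarrow> real^'d::finite \<Rightarrow> real^'d^'d"
  assumes "good F G x" shows "AP (\<lambda>e. divm (F e) x) (divm G x)"
  unfolding divm_def using assms[unfolded good_def]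
  by (intro AP_vec) (simp, intro AP_sum AP_component, auto)

lemma good_val: "good F G x \<Longrightarrow> AP (\<lambda>e. F e x) (G x)" unfolding good_def by blast


lemma bb_outer: "bounded_bilinear (outer :: real^'d::finite \<Rightarrow> real^'d \<Rightarrow> real^'d^'d)"
proof -
  have "bilinear (outer :: real^'d::finite \<Rightarrow> real^'d \<Rightarrow> real^'d^'d)"
    unfolding bilinear_def outer_def by (auto intro!: linearI simp: vec_eq_iff algebra_simps)
  thus ?thesis by (simp add: bilinear_conv_bounded_bilinear)
qed

lemma AP_mult: "AP f a \<Longrightarrow> AP g b \<Longrightarrow> AP (\<lambda>e. f e * g e) (a * (b::real))"
  by (rule AP_bilinear[OF bounded_bilinear_mult])
lemma AP_scaleR: "AP f a \<Longrightarrow> AP g b \<Longrightarrow> AP (\<lambda>e. f e *\<^sub>R g e) (a *\<^sub>R b)"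
  by (rule AP_bilinear[OF bounded_bilinear_scaleR])
lemma AP_inner: "AP f a \<Longrightarrow> AP g b \<Longrightarrow> AP (\<lambda>e. inner (f e) (g e)) (inner a b)"
  by (rule AP_bilinear[OF bounded_bilinear_inner])

lemma good_mult: "good F G x \<Longrightarrow> good H K x \<Longrightarrow> good (\<lambda>e y. F e y * H e y) (\<lambda>y. G y * (K y :: real)) x"
  by (rule good_bilinear[OF bounded_bilinear_mult])
lemma good_scaleR: "good F G x \<Longrightarrow> good H K x \<Longrightarrow> good (\<lambda>e y. F e y *\<^sub>R H e y) (\<lambda>y. G y *\<^sub>R K y) x"
  by (rule good_bilinear[OF bounded_bilinear_scaleR])
lemma good_inner: "good F G x \<Longrightarrow> good H K x \<Longrightarrow> good (\<lambda>e y. inner (F e y) (H e y)) (\<lambda>y. inner (G y) (K y)) x"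
  by (rule good_bilinear[OF bounded_bilinear_inner])
lemma good_outer: "good F G x \<Longrightarrow> good H K x \<Longrightarrow> good (\<lambda>e y. outer (F e y) (H e y)) (\<lambda>y. outer (G y) (K y)) x"
  by (rule good_bilinear[OF bb_outer])

lemma AP_e2h: "AP (\<lambda>e. e\<^sup>2 / 2) (0::real)"
  using AP_mult[OF AP_sq AP_const[of "1/2"]] by simp
lemma AP_1me2: "AP (\<lambda>e. 1 - e\<^sup>2) (1::real)"
  using AP_diff[OF AP_const[of 1] AP_sq] by simp

lemma divm_I:
  fixes f :: "real^'d::finite \<Rightarrow> real"
  assumes f: "f differentiable (at x)"
  shows "divm (\<lambda>y. f y *\<^sub>R mat 1) x = (\<chi> j. pdx j f x)"
proof -
  have h: "pdx i (\<lambda>y. f y *\<^sub>R (mat 1 :: real^'d^'d)) x = pdx i f x *\<^sub>R mat 1" for i :: 'd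
    using pdx_bilinear(2)[OF bounded_bilinear_scaleR f differentiable_const, of i "mat 1"]
    by (simp add: pdx_const)
  show ?thesis unfolding divm_def h by (simp add: vec_eq_iff mat_def if_distrib cong: if_cong)
qed

lemma te_eq: "total_energy \<gamma> e a w b = (1 / (\<gamma> - 1)) * b + (e\<^sup>2 / 2 * a) * inner w w"
  unfolding total_energy_def by (simp add: power2_norm_eq_inner)

lemma te_AP:
  assumes "good \<rho> r0 x" "good u v0 x" "good p p0 x"
  shows "AP (\<lambda>e. total_energy \<gamma> e (\<rho> e x) (u e x) (p e x)) (p0 x / (\<gamma> - 1))"
proof -
  have "AP (\<lambda>e. (1 / (\<gamma> - 1)) * p e x + (e\<^sup>2 / 2 * \<rho> e x) * inner (u e x) (u e x))
            ((1 / (\<gamma> - 1)) * p0 x + (0 * r0 x) * inner (v0 x) (v0 x))"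
    using assms[THEN good_val]
    by (intro AP_add AP_mult AP_const AP_e2h AP_inner) auto
  thus ?thesis by (simp add: te_eq)
qed

lemma AP_bigo_goal: "AP h 0 \<Longrightarrow> (\<lambda>e. norm (h e)) \<in> O[at_right 0](\<lambda>e. e)"
proof -
  assume "AP h 0"
  then obtain C where C: "eventually (\<lambda>e. norm (h e - 0) \<le> C * e) (at_right 0)" unfolding AP_def by blast
  have "eventually (\<lambda>e. norm (norm (h e)) \<le> C * norm e) (at_right 0)"
    using C ev_pos by eventually_elim auto
  thus ?thesis by (rule bigoI)
qed


theorem lemma3p2:
  fixes \<gamma> \<Delta>t :: real
    and \<rho> \<rho>' p p' :: "real \<Rightarrow> real^'d::finite \<Rightarrow> real"
    and u u' :: "real \<Rightarrow> real^'d \<Rightarrow> real^'d"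
    and pinf pinf' :: "real \<Rightarrow> real"
    and r r' pc pc' :: "nat \<Rightarrow> real^'d \<Rightarrow> real"
    and v v' :: "nat \<Rightarrow> real^'d \<Rightarrow> real^'d"
    and q q' :: "nat \<Rightarrow> real"
  assumes gamma: "\<gamma> > 1"
    and dt: "\<Delta>t > 0"
    and pinf_def: "\<forall>\<epsilon>\<in>{0<..1}. pinf \<epsilon> = (INF y. p \<epsilon> y)"
    and pinf'_def: "\<forall>\<epsilon>\<in>{0<..1}. pinf' \<epsilon> = (INF y. p' \<epsilon> y)"
    and exp_rho: "field_expansion \<rho> r" and exp_rho': "field_expansion \<rho>' r'"
    and exp_u: "field_expansion u v" and exp_u': "field_expansion u' v'"
    and exp_p: "field_expansion p pc" and exp_p': "field_expansion p' pc'"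
    and exp_pinf: "const_expansion pinf q" and exp_pinf': "const_expansion pinf' q'"
    and scheme_mass: "\<forall>\<epsilon>\<in>{0<..1}. \<forall>x.
          \<rho>' \<epsilon> x = \<rho> \<epsilon> x - \<Delta>t * divv (\<lambda>y. \<rho> \<epsilon> y *\<^sub>R u \<epsilon> y) x"
    and scheme_mom: "\<forall>\<epsilon>\<in>{0<..1}. \<forall>x.
          \<rho>' \<epsilon> x *\<^sub>R u' \<epsilon> x = \<rho> \<epsilon> x *\<^sub>R u \<epsilon> x
            - \<Delta>t *\<^sub>R divm (\<lambda>y. \<rho> \<epsilon> y *\<^sub>R outer (u \<epsilon> y) (u \<epsilon> y) + p \<epsilon> y *\<^sub>R mat 1) x
            - \<Delta>t *\<^sub>R divm (\<lambda>y. ((1 - \<epsilon>\<^sup>2) / \<epsilon>\<^sup>2 * p' \<epsilon> y) *\<^sub>R mat 1) x"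
    and scheme_energy: "\<forall>\<epsilon>\<in>{0<..1}. \<forall>x.
          total_energy \<gamma> \<epsilon> (\<rho>' \<epsilon> x) (u' \<epsilon> x) (p' \<epsilon> x)
          = total_energy \<gamma> \<epsilon> (\<rho> \<epsilon> x) (u \<epsilon> x) (p \<epsilon> x)
            - \<Delta>t * divv (\<lambda>y. (total_energy \<gamma> \<epsilon> (\<rho> \<epsilon> y) (u \<epsilon> y) (p \<epsilon> y)
                                 + Pi_fun \<epsilon> (p \<epsilon> y) (pinf \<epsilon>)) *\<^sub>R u \<epsilon> y) x
            - \<Delta>t * divv (\<lambda>y. (p' \<epsilon> y - Pi_fun \<epsilon> (p' \<epsilon> y) (pinf' \<epsilon>)) *\<^sub>R u' \<epsilon> y) x"
  shows "\<forall>x.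
     (\<lambda>\<epsilon>. norm (r' 0 x - (r 0 x - \<Delta>t * divv (\<lambda>y. r 0 y *\<^sub>R v 0 y) x)))
        \<in> O[at_right 0](\<lambda>\<epsilon>. \<epsilon>)
   \<and> (\<lambda>\<epsilon>. norm (r' 0 x *\<^sub>R v' 0 x -
         (r 0 x *\<^sub>R v 0 x
          - \<Delta>t *\<^sub>R (divm (\<lambda>y. r 0 y *\<^sub>R outer (v 0 y) (v 0 y) + pc 0 y *\<^sub>R mat 1) x
               + (1 / \<epsilon>\<^sup>2) *\<^sub>R divm (\<lambda>y. pc' 0 y *\<^sub>R mat 1) x
               + (1 / \<epsilon>) *\<^sub>R divm (\<lambda>y. pc' 1 y *\<^sub>R mat 1) x
               + divm (\<lambda>y. (pc' 2 y - pc' 0 y) *\<^sub>R mat 1) x))))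
        \<in> O[at_right 0](\<lambda>\<epsilon>. \<epsilon>)
   \<and> (\<lambda>\<epsilon>. norm (pc' 0 x / (\<gamma> - 1) -
         (pc 0 x / (\<gamma> - 1)
          - \<Delta>t * (divv (\<lambda>y. (pc 0 y / (\<gamma> - 1) + q 0) *\<^sub>R v 0 y) x
                  + divv (\<lambda>y. (pc' 0 y - q' 0) *\<^sub>R v' 0 y) x))))
        \<in> O[at_right 0](\<lambda>\<epsilon>. \<epsilon>)"
proof (intro allI)
  fix x :: "real^'d"
  have ev: "eventually (\<lambda>e::real. e \<in> {0<..1}) (at_right 0)"
    using ev_pos by (auto elim: eventually_mono)
  have gR: "good \<rho> (r 0) x" and gR': "good \<rho>' (r' 0) x" and gU: "good u (v 0) x"
    and gU': "good u' (v' 0) x" and gP: "good p (pc 0) x" and gP': "good p' (pc' 0) x"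
    using exp_rho exp_rho' exp_u exp_u' exp_p exp_p' by (auto intro: good_exp)
  have APc: "AP f (c 0)" if "const_expansion f c" for f c
  proof -
    have "AP (\<lambda>e. f e - (c 0 + e *\<^sub>R c 1 + e\<^sup>2 *\<^sub>R c 2)) 0"
      using that unfolding const_expansion_def by (intro AP_bigo3(2)) simp
    hence "AP (\<lambda>e. c 0 + e *\<^sub>R c 1 + e\<^sup>2 *\<^sub>R c 2 + (f e - (c 0 + e *\<^sub>R c 1 + e\<^sup>2 *\<^sub>R c 2))) (c 0)"
      by (rule AP_poly)
    thus ?thesis by simp
  qed
  have gpinf: "good (\<lambda>e y. pinf e) (\<lambda>y. q 0) x" and gpinf': "good (\<lambda>e y. pinf' e) (\<lambda>y. q' 0) x"
    using APc[OF exp_pinf] APc[OF exp_pinf'] by (auto intro: good_const)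
  have gc: "good (\<lambda>e y. c) (\<lambda>y. c) x" for c :: "'z::real_normed_vector"
    by (rule good_const[OF AP_const])
  have ge2: "good (\<lambda>e y. e\<^sup>2) (\<lambda>y. 0) x" by (rule good_const[OF AP_sq])
  have ge2h: "good (\<lambda>e y. e\<^sup>2 / 2) (\<lambda>y. 0) x" by (rule good_const[OF AP_e2h])
  have g1me2: "good (\<lambda>e y. 1 - e\<^sup>2) (\<lambda>y. 1) x" by (rule good_const[OF AP_1me2])

  have gm: "good (\<lambda>e y. \<rho> e y *\<^sub>R u e y) (\<lambda>y. r 0 y *\<^sub>R v 0 y) x"
    by (rule good_scaleR[OF gR gU])
  have m1: "AP (\<lambda>e. \<rho> e x - \<Delta>t * divv (\<lambda>y. \<rho> e y *\<^sub>R u e y) x)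
                (r 0 x - \<Delta>t * divv (\<lambda>y. r 0 y *\<^sub>R v 0 y) x)"
    by (intro AP_diff AP_mult AP_const good_divv[OF gm] good_val[OF gR])
  have m2: "eventually (\<lambda>e. \<rho> e x - \<Delta>t * divv (\<lambda>y. \<rho> e y *\<^sub>R u e y) x = \<rho>' e x) (at_right 0)"
    using ev by eventually_elim (use scheme_mass in auto)
  have mass: "r' 0 x = r 0 x - \<Delta>t * divv (\<lambda>y. r 0 y *\<^sub>R v 0 y) x"
    using AP_unique[OF good_val[OF gR'] AP_cong_ev[OF m2 m1]] .

  have gE1: "good (\<lambda>e y. ((1 / (\<gamma> - 1)) * p e y + (e\<^sup>2 / 2 * \<rho> e y) * inner (u e y) (u e y)
                 + (e\<^sup>2 * p e y + (1 - e\<^sup>2) * pinf e)) *\<^sub>R u e y)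
      (\<lambda>y. ((1 / (\<gamma> - 1)) * pc 0 y + (0 * r 0 y) * inner (v 0 y) (v 0 y)
                 + (0 * pc 0 y + 1 * q 0)) *\<^sub>R v 0 y) x"
    by (intro good_scaleR good_add good_mult good_inner gc gR gU gP ge2 ge2h g1me2 gpinf)
  have gE1': "good (\<lambda>e y. (total_energy \<gamma> e (\<rho> e y) (u e y) (p e y) + Pi_fun e (p e y) (pinf e)) *\<^sub>R u e y)
      (\<lambda>y. (pc 0 y / (\<gamma> - 1) + q 0) *\<^sub>R v 0 y) x"
    by (rule good_cong[OF gE1]) (auto simp: te_eq Pi_fun_def fun_eq_iff)
  have gE2: "good (\<lambda>e y. (p' e y - (e\<^sup>2 * p' e y + (1 - e\<^sup>2) * pinf' e)) *\<^sub>R u' e y)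
      (\<lambda>y. (pc' 0 y - (0 * pc' 0 y + 1 * q' 0)) *\<^sub>R v' 0 y) x"
    by (intro good_scaleR good_add good_diff good_mult gP' gU' ge2 g1me2 gpinf')
  have gE2': "good (\<lambda>e y. (p' e y - Pi_fun e (p' e y) (pinf' e)) *\<^sub>R u' e y)
      (\<lambda>y. (pc' 0 y - q' 0) *\<^sub>R v' 0 y) x"
    by (rule good_cong[OF gE2]) (auto simp: Pi_fun_def fun_eq_iff)
  have e1: "AP (\<lambda>e. total_energy \<gamma> e (\<rho> e x) (u e x) (p e x)
            - \<Delta>t * divv (\<lambda>y. (total_energy \<gamma> e (\<rho> e y) (u e y) (p e y)
                                 + Pi_fun e (p e y) (pinf e)) *\<^sub>R u e y) x
            - \<Delta>t * divv (\<lambda>y. (p' e y - Pi_fun e (p' e y) (pinf' e)) *\<^sub>R u' e y) x)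
      (pc 0 x / (\<gamma> - 1) - \<Delta>t * divv (\<lambda>y. (pc 0 y / (\<gamma> - 1) + q 0) *\<^sub>R v 0 y) x
        - \<Delta>t * divv (\<lambda>y. (pc' 0 y - q' 0) *\<^sub>R v' 0 y) x)"
    by (intro AP_diff AP_mult AP_const good_divv[OF gE1'] good_divv[OF gE2'] te_AP[OF gR gU gP])
  have e2: "eventually (\<lambda>e. total_energy \<gamma> e (\<rho> e x) (u e x) (p e x)
            - \<Delta>t * divv (\<lambda>y. (total_energy \<gamma> e (\<rho> e y) (u e y) (p e y)
                                 + Pi_fun e (p e y) (pinf e)) *\<^sub>R u e y) x
            - \<Delta>t * divv (\<lambda>y. (p' e y - Pi_fun e (p' e y) (pinf' e)) *\<^sub>R u' e y) x
         = total_energy \<gamma> e (\<rho>' e x) (u' e x) (p' e x)) (at_right 0)"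
    using ev by eventually_elim (use scheme_energy in auto)
  have energy: "pc' 0 x / (\<gamma> - 1) = pc 0 x / (\<gamma> - 1) - \<Delta>t * divv (\<lambda>y. (pc 0 y / (\<gamma> - 1) + q 0) *\<^sub>R v 0 y) x
        - \<Delta>t * divv (\<lambda>y. (pc' 0 y - q' 0) *\<^sub>R v' 0 y) x"
    using AP_unique[OF te_AP[OF gR' gU' gP'] AP_cong_ev[OF e2 e1]] .

  define G1 where "G1 = (\<lambda>y. r 0 y *\<^sub>R outer (v 0 y) (v 0 y) + pc 0 y *\<^sub>R (mat 1 :: real^'d^'d))"
  have gM: "good (\<lambda>e y. \<rho> e y *\<^sub>R outer (u e y) (u e y) + p e y *\<^sub>R mat 1) G1 x"
    unfolding G1_def by (intro good_add good_scaleR good_outer gR gU gP gc)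
  define K2 where "K2 = (r 0 x *\<^sub>R v 0 x - \<Delta>t *\<^sub>R divm G1 x) - r' 0 x *\<^sub>R v' 0 x"
  define P where "P e = \<Delta>t *\<^sub>R divm (\<lambda>y. ((1 - e\<^sup>2) / e\<^sup>2 * p' e y) *\<^sub>R mat 1) x" for e
  define T where "T e = (1 / e\<^sup>2) *\<^sub>R divm (\<lambda>y. pc' 0 y *\<^sub>R mat 1) x
               + (1 / e) *\<^sub>R divm (\<lambda>y. pc' 1 y *\<^sub>R mat 1) x
               + divm (\<lambda>y. (pc' 2 y - pc' 0 y) *\<^sub>R mat 1) x" for e
  have p1: "AP (\<lambda>e. (\<rho> e x *\<^sub>R u e x - \<Delta>t *\<^sub>R divm (\<lambda>y. \<rho> e y *\<^sub>R outer (u e y) (u e y) + p e y *\<^sub>R mat 1) x)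
              - \<rho>' e x *\<^sub>R u' e x) K2"
    unfolding K2_def
    by (intro AP_diff AP_scaleR AP_const good_divm[OF gM] good_val[OF gR] good_val[OF gU]
        good_val[OF gR'] good_val[OF gU'])
  have p2: "eventually (\<lambda>e. (\<rho> e x *\<^sub>R u e x - \<Delta>t *\<^sub>R divm (\<lambda>y. \<rho> e y *\<^sub>R outer (u e y) (u e y) + p e y *\<^sub>R mat 1) x)
              - \<rho>' e x *\<^sub>R u' e x = P e) (at_right 0)"
    using ev by eventually_elim (use scheme_mom in \<open>auto simp: P_def algebra_simps\<close>)
  have PK: "AP P K2" using AP_cong_ev[OF p2 p1] .
  have PT: "AP (\<lambda>e. P e - \<Delta>t *\<^sub>R T e) 0"
  proof (rule AP_vec)
    fix j :: 'd
    note d = exp_p'[unfolded field_expansion_def]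
    define D where "D k = pdx j (pc' k) x" for k
    define S where "S e = pdx j (\<lambda>y. p' e y - (pc' 0 y + e *\<^sub>R pc' 1 y + e\<^sup>2 *\<^sub>R pc' 2 y)) x" for e
    have dc: "pc' k differentiable (at y)" if "k \<le> 2" for k y using d that by blast
    have AS: "AP (\<lambda>e. (1 / e\<^sup>2) *\<^sub>R S e) 0" using d unfolding S_def by (intro AP_bigo3(1)) blast
    have A2: "AP (\<lambda>e. \<Delta>t * ((1 - e\<^sup>2) * ((1 / e\<^sup>2) *\<^sub>R S e) - e * D 1 - e\<^sup>2 * D 2))
        (\<Delta>t * (1 * 0 - 0 * D 1 - 0 * D 2))"
      by (intro AP_mult AP_diff AP_const AS AP_1me2 AP_eps AP_sq)
    have E: "eventually (\<lambda>e. \<Delta>t * ((1 - e\<^sup>2) * ((1 / e\<^sup>2) *\<^sub>R S e) - e * D 1 - e\<^sup>2 * D 2)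
        = (P e - \<Delta>t *\<^sub>R T e) $ j) (at_right 0)"
      using ev
    proof eventually_elim
      case (elim e)
      have dp: "p' e differentiable (at x)" using d elim by blast
      have d0: "pc' 0 differentiable (at x)" and d1: "pc' 1 differentiable (at x)" and d2: "pc' 2 differentiable (at x)"
        using dc by auto
      have Se: "S e = pdx j (p' e) x - (D 0 + e * D 1 + e\<^sup>2 * D 2)"
      proof -
        have "S e = pdx j (p' e) x - pdx j (\<lambda>y. pc' 0 y + e *\<^sub>R pc' 1 y + e\<^sup>2 *\<^sub>R pc' 2 y) x"
          unfolding S_def using dp d0 d1 d2
          by (intro pdx_diff(2)) (auto intro!: pdx_add(1) pdx_scale(1))
        also have "pdx j (\<lambda>y. pc' 0 y + e *\<^sub>R pc' 1 y + e\<^sup>2 *\<^sub>R pc' 2 y) x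
            = D 0 + e * D 1 + e\<^sup>2 * D 2"
        proof -
          have a1: "(\<lambda>y. e *\<^sub>R pc' 1 y) differentiable (at x)" by (rule pdx_scale(1)[OF d1])
          have a2: "(\<lambda>y. e\<^sup>2 *\<^sub>R pc' 2 y) differentiable (at x)" by (rule pdx_scale(1)[OF d2])
          have a3: "(\<lambda>y. pc' 0 y + e *\<^sub>R pc' 1 y) differentiable (at x)" by (rule pdx_add(1)[OF d0 a1])
          have "pdx j (\<lambda>y. pc' 0 y + e *\<^sub>R pc' 1 y + e\<^sup>2 *\<^sub>R pc' 2 y) x
              = pdx j (pc' 0) x + e *\<^sub>R pdx j (pc' 1) x + e\<^sup>2 *\<^sub>R pdx j (pc' 2) x"
            by (simp only: pdx_add(2)[OF a3 a2] pdx_add(2)[OF d0 a1] pdx_scale(2)[OF d1] pdx_scale(2)[OF d2])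
          thus ?thesis by (simp add: D_def)
        qed
        finally show ?thesis .
      qed
      have ds: "(\<lambda>y. ((1 - e\<^sup>2) / e\<^sup>2) *\<^sub>R p' e y) differentiable (at x)" by (rule pdx_scale(1)[OF dp])
      have Pj: "P e $ j = \<Delta>t * ((1 - e\<^sup>2) / e\<^sup>2 * pdx j (p' e) x)"
        using divm_I[OF ds] pdx_scale(2)[OF dp, of j "(1 - e\<^sup>2) / e\<^sup>2"] by (simp add: P_def)
      have d20: "(\<lambda>y. pc' 2 y - pc' 0 y) differentiable (at x)" by (rule pdx_diff(1)[OF d2 d0])
      have Tj: "T e $ j = 1 / e\<^sup>2 * D 0 + 1 / e * D 1 + (D 2 - D 0)"
        using divm_I[OF d0] divm_I[OF d1] divm_I[OF d20] pdx_diff(2)[OF d2 d0, of j]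
        by (simp add: T_def D_def)
      have "pdx j (p' e) x = D 0 + e * D 1 + e\<^sup>2 * D 2 + S e" using Se by simp
      thus ?case using elim unfolding Pj Tj vector_minus_component vector_scaleR_component
        by (simp add: field_simps power2_eq_square)
    qed
    show "AP (\<lambda>e. (P e - \<Delta>t *\<^sub>R T e) $ j) (0 $ j)"
      using AP_cong_ev[OF E A2] by simp
  qed
  have mom0: "AP (\<lambda>e. (P e - K2) - (P e - \<Delta>t *\<^sub>R T e)) (K2 - K2 - 0)"
    by (intro AP_diff AP_const PK PT)
  have mom: "AP (\<lambda>e. r' 0 x *\<^sub>R v' 0 x -
         (r 0 x *\<^sub>R v 0 x
          - \<Delta>t *\<^sub>R (divm (\<lambda>y. r 0 y *\<^sub>R outer (v 0 y) (v 0 y) + pc 0 y *\<^sub>R mat 1) x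
               + (1 / e\<^sup>2) *\<^sub>R divm (\<lambda>y. pc' 0 y *\<^sub>R mat 1) x
               + (1 / e) *\<^sub>R divm (\<lambda>y. pc' 1 y *\<^sub>R mat 1) x
               + divm (\<lambda>y. (pc' 2 y - pc' 0 y) *\<^sub>R mat 1) x))) 0"
  proof -
    have "(P e - K2) - (P e - \<Delta>t *\<^sub>R T e) = r' 0 x *\<^sub>R v' 0 x -
         (r 0 x *\<^sub>R v 0 x
          - \<Delta>t *\<^sub>R (divm (\<lambda>y. r 0 y *\<^sub>R outer (v 0 y) (v 0 y) + pc 0 y *\<^sub>R mat 1) x
               + (1 / e\<^sup>2) *\<^sub>R divm (\<lambda>y. pc' 0 y *\<^sub>R mat 1) x
               + (1 / e) *\<^sub>R divm (\<lambda>y. pc' 1 y *\<^sub>R mat 1) x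
               + divm (\<lambda>y. (pc' 2 y - pc' 0 y) *\<^sub>R mat 1) x))" for e
      unfolding K2_def T_def G1_def by (simp add: algebra_simps)
    thus ?thesis using mom0 by simp
  qed
  show "(\<lambda>\<epsilon>. norm (r' 0 x - (r 0 x - \<Delta>t * divv (\<lambda>y. r 0 y *\<^sub>R v 0 y) x)))
        \<in> O[at_right 0](\<lambda>\<epsilon>. \<epsilon>)
   \<and> (\<lambda>\<epsilon>. norm (r' 0 x *\<^sub>R v' 0 x -
         (r 0 x *\<^sub>R v 0 x
          - \<Delta>t *\<^sub>R (divm (\<lambda>y. r 0 y *\<^sub>R outer (v 0 y) (v 0 y) + pc 0 y *\<^sub>R mat 1) x
               + (1 / \<epsilon>\<^sup>2) *\<^sub>R divm (\<lambda>y. pc' 0 y *\<^sub>R mat 1) x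
               + (1 / \<epsilon>) *\<^sub>R divm (\<lambda>y. pc' 1 y *\<^sub>R mat 1) x
               + divm (\<lambda>y. (pc' 2 y - pc' 0 y) *\<^sub>R mat 1) x))))
        \<in> O[at_right 0](\<lambda>\<epsilon>. \<epsilon>)
   \<and> (\<lambda>\<epsilon>. norm (pc' 0 x / (\<gamma> - 1) -
         (pc 0 x / (\<gamma> - 1)
          - \<Delta>t * (divv (\<lambda>y. (pc 0 y / (\<gamma> - 1) + q 0) *\<^sub>R v 0 y) x
                  + divv (\<lambda>y. (pc' 0 y - q' 0) *\<^sub>R v' 0 y) x))))
        \<in> O[at_right 0](\<lambda>\<epsilon>. \<epsilon>)"
  proof (intro conjI)
    show "(\<lambda>\<epsilon>. norm (r' 0 x - (r 0 x - \<Delta>t * divv (\<lambda>y. r 0 y *\<^sub>R v 0 y) x)))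
        \<in> O[at_right 0](\<lambda>\<epsilon>. \<epsilon>)" using AP_bigo_goal[OF AP_const[of 0]] mass by simp
    show "(\<lambda>\<epsilon>. norm (pc' 0 x / (\<gamma> - 1) -
         (pc 0 x / (\<gamma> - 1)
          - \<Delta>t * (divv (\<lambda>y. (pc 0 y / (\<gamma> - 1) + q 0) *\<^sub>R v 0 y) x
                  + divv (\<lambda>y. (pc' 0 y - q' 0) *\<^sub>R v' 0 y) x))))
        \<in> O[at_right 0](\<lambda>\<epsilon>. \<epsilon>)"
      using AP_bigo_goal[OF AP_const[of 0]] energy by (simp add: algebra_simps)
  qed (rule AP_bigo_goal[OF mom])
qed

end
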